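(* Let $(R,\mathfrak{m})$ be a one-dimensional Cohen–Macaulay local ring. Let $I$ be a regular trace ideal with a principal reduction $(x)$, and let $J$ be a trace ideal with $I\subseteq J\subseteq\bar I$. If $J$ is stable, then $I=J$.
   Context: An ideal is regular if it contains a nonzerodivisor. A principal reduction of $I$ is a principal ideal $(x)\subseteq I$ with $xI^n=I^{n+1}$ for some $n$. For an $R$-module $N$, $\operatorname{tr}(N)$ is the image of $N\otimes_R\operatorname{Hom}_R(N,R)\to R$; an ideal is a trace ideal if it equals $\operatorname{tr}(N)$ for some $N$. $\bar I$ is the integral closure of $I$. $Q(R)$ is the total quotient ring; for a regular ideal $J$, $B_R(J)=\bigcup_{n>0}(J^n:_{Q(R)}J^n)$, and $J$ is stable if $B_R(J)=J:_{Q(R)}J$. *)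

theory Defs
  imports Main "HOL.Modules"
begin

text \<open>Commutative ring R is the type 'a :: comm_ring_1; ideals are subsets of the type.\<close>

definition is_ideal :: "'a::comm_ring_1 set \<Rightarrow> bool" where
  "is_ideal I \<longleftrightarrow> 0 \<in> I \<and> (\<forall>a\<in>I. \<forall>b\<in>I. a + b \<in> I) \<and> (\<forall>r. \<forall>a\<in>I. r * a \<in> I)"

definition ideal_gen :: "'a::comm_ring_1 set \<Rightarrow> 'a set" where
  "ideal_gen S = \<Inter>{I. is_ideal I \<and> S \<subseteq> I}"

definition prime_ideal :: "'a::comm_ring_1 set \<Rightarrow> bool" where
  "prime_ideal P \<longleftrightarrow> is_ideal P \<and> P \<noteq> UNIV \<and> (\<forall>a b. a * b \<in> P \<longrightarrow> a \<in> P \<or> b \<in> P)"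

definition maximal_ideal :: "'a::comm_ring_1 set \<Rightarrow> bool" where
  "maximal_ideal M \<longleftrightarrow> is_ideal M \<and> M \<noteq> UNIV \<and>
     (\<forall>K. is_ideal K \<and> M \<subseteq> K \<longrightarrow> K = M \<or> K = UNIV)"

definition local_ring :: "'a::comm_ring_1 set \<Rightarrow> bool" where
  "local_ring M \<longleftrightarrow> maximal_ideal M \<and> (\<forall>M'. maximal_ideal M' \<longrightarrow> M' = M)"

definition noetherian :: "'a::comm_ring_1 itself \<Rightarrow> bool" where
  "noetherian (T::'a itself) \<longleftrightarrow>
     (\<forall>I::'a set. is_ideal I \<longrightarrow> (\<exists>F. finite F \<and> I = ideal_gen F))"

text \<open>A chain of primes P_0 \<subset> ... \<subset> P_k, given as a list (length k+1).\<close>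
definition prime_chain :: "'a::comm_ring_1 set list \<Rightarrow> bool" where
  "prime_chain ps \<longleftrightarrow> ps \<noteq> [] \<and> (\<forall>P\<in>set ps. prime_ideal P) \<and> sorted_wrt (\<subset>) ps"

definition krull_dim_is :: "'a::comm_ring_1 itself \<Rightarrow> nat \<Rightarrow> bool" where
  "krull_dim_is (T::'a itself) d \<longleftrightarrow>
     (\<exists>ps::'a set list. prime_chain ps \<and> length ps = d + 1) \<and>
     (\<forall>ps::'a set list. prime_chain ps \<longrightarrow> length ps \<le> d + 1)"

definition nonzerodivisor :: "'a::comm_ring_1 \<Rightarrow> bool" where
  "nonzerodivisor s \<longleftrightarrow> (\<forall>r. s * r = 0 \<longrightarrow> r = 0)"

definition regular_seq :: "'a::comm_ring_1 set \<Rightarrow> 'a list \<Rightarrow> bool" where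
  "regular_seq M xs \<longleftrightarrow> set xs \<subseteq> M \<and> ideal_gen (set xs) \<noteq> UNIV \<and>
     (\<forall>i < length xs. \<forall>r. xs ! i * r \<in> ideal_gen (set (take i xs)) \<longrightarrow> r \<in> ideal_gen (set (take i xs)))"

text \<open>Cohen-Macaulay local ring: depth = dim, i.e. m contains a regular sequence of length dim R
  (depth never exceeds dim).\<close>
definition cohen_macaulay_local :: "'a::comm_ring_1 set \<Rightarrow> bool" where
  "cohen_macaulay_local M \<longleftrightarrow> local_ring M \<and> noetherian TYPE('a) \<and>
     (\<exists>d. krull_dim_is TYPE('a) d \<and> (\<exists>xs. regular_seq M xs \<and> length xs = d))"

definition regular_ideal :: "'a::comm_ring_1 set \<Rightarrow> bool" where
  "regular_ideal I \<longleftrightarrow> (\<exists>s\<in>I. nonzerodivisor s)"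

fun ideal_pow :: "'a::comm_ring_1 set \<Rightarrow> nat \<Rightarrow> 'a set" where
  "ideal_pow I 0 = UNIV"
| "ideal_pow I (Suc n) = ideal_gen {a * b | a b. a \<in> I \<and> b \<in> ideal_pow I n}"

definition principal_reduction :: "'a::comm_ring_1 \<Rightarrow> 'a set \<Rightarrow> bool" where
  "principal_reduction x I \<longleftrightarrow> x \<in> I \<and> (\<exists>n. (\<lambda>b. x * b) ` ideal_pow I n = ideal_pow I (Suc n))"

definition integral_closure :: "'a::comm_ring_1 set \<Rightarrow> 'a set" where
  "integral_closure I = {r. \<exists>n\<ge>1. \<exists>a::nat \<Rightarrow> 'a. (\<forall>i\<in>{1..n}. a i \<in> ideal_pow I i) \<and>
      r ^ n + (\<Sum>i=1..n. a i * r ^ (n - i)) = 0}"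

text \<open>Trace of the R-module N (the type 'b with scalar multiplication scale):
  the image of N \<otimes> Hom_R(N,R) \<rightarrow> R, i.e. all finite sums of f_i(n_i), f_i \<in> Hom_R(N,R).\<close>
definition trace_of :: "('a::comm_ring_1 \<Rightarrow> 'b::ab_group_add \<Rightarrow> 'b) \<Rightarrow> 'a set" where
  "trace_of scale = {(\<Sum>i<k. f i (v i)) | (k::nat) (f::nat \<Rightarrow> 'b \<Rightarrow> 'a) (v::nat \<Rightarrow> 'b).
     \<forall>i<k. module_hom scale ((*) :: 'a \<Rightarrow> 'a \<Rightarrow> 'a) (f i)}"

text \<open>Elements of the total quotient ring Q(R) are fractions a/s with s a nonzerodivisor;
  a subset of Q(R) is represented by the set of all pairs (a,s) representing its elements.
  For ideals A, B, the colon A :_Q B = {q \<in> Q(R). q B \<subseteq> A}; (a/s) b \<in> A (viewed in Q(R))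
  iff a b = s c for some c \<in> A.\<close>
definition frac_colon :: "'a::comm_ring_1 set \<Rightarrow> 'a set \<Rightarrow> ('a \<times> 'a) set" where
  "frac_colon A B = {(a, s). nonzerodivisor s \<and> (\<forall>b\<in>B. \<exists>c\<in>A. a * b = s * c)}"

definition blowup_ring :: "'a::comm_ring_1 set \<Rightarrow> ('a \<times> 'a) set" where
  "blowup_ring J = (\<Union>n\<in>{0<..}. frac_colon (ideal_pow J n) (ideal_pow J n))"

definition stable_ideal :: "'a::comm_ring_1 set \<Rightarrow> bool" where
  "stable_ideal J \<longleftrightarrow> regular_ideal J \<and> blowup_ring J = frac_colon J J"

end

theory Submission imports Defs begin

lemma ideal_UNIV: "is_ideal (UNIV::'a::comm_ring_1 set)"
  by (simp add: is_ideal_def)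

lemma gen_ideal: "is_ideal (ideal_gen S)"
  unfolding is_ideal_def ideal_gen_def by auto

lemma gen_sub: "S \<subseteq> ideal_gen S"
  unfolding ideal_gen_def by auto

lemma gen_least: "is_ideal K \<Longrightarrow> S \<subseteq> K \<Longrightarrow> ideal_gen S \<subseteq> K"
  unfolding ideal_gen_def by auto

lemma gen_mono: "S \<subseteq> T \<Longrightarrow> ideal_gen S \<subseteq> ideal_gen T"
  unfolding ideal_gen_def by auto

lemma gen_id: "is_ideal K \<Longrightarrow> ideal_gen K = K"
  by (rule subset_antisym[OF gen_least[OF _ order_refl] gen_sub])

lemma id_add: "is_ideal K \<Longrightarrow> a \<in> K \<Longrightarrow> b \<in> K \<Longrightarrow> a + b \<in> K"
  by (simp add: is_ideal_def)
lemma id_mult: "is_ideal K \<Longrightarrow> a \<in> K \<Longrightarrow> r * a \<in> K"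
  by (simp add: is_ideal_def)
lemma id_mult2: "is_ideal K \<Longrightarrow> a \<in> K \<Longrightarrow> a * r \<in> K"
  by (metis id_mult mult.commute)
lemma id_zero: "is_ideal K \<Longrightarrow> 0 \<in> K"
  by (simp add: is_ideal_def)
lemma id_neg: "is_ideal K \<Longrightarrow> a \<in> K \<Longrightarrow> - a \<in> K"
  using id_mult[of K a "-1"] by simp
lemma id_sum: "is_ideal K \<Longrightarrow> (\<And>i. i \<in> S \<Longrightarrow> f i \<in> K) \<Longrightarrow> sum f S \<in> K"
proof (induction S rule: infinite_finite_induct)
  case (infinite A) then show ?case by (simp add: id_zero)
next
  case empty then show ?case by (simp add: id_zero)
next
  case (insert x F) then show ?case by (simp add: id_add)
qed

definition pr :: "'a::comm_ring_1 set \<Rightarrow> 'a set \<Rightarrow> 'a set" where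
  "pr A B = ideal_gen {a * b | a b. a \<in> A \<and> b \<in> B}"

lemma pw_Suc: "ideal_pow I (Suc n) = pr I (ideal_pow I n)"
  by (simp add: pr_def)

declare ideal_pow.simps(2)[simp del]

lemma pr_ideal: "is_ideal (pr A B)"
  by (simp add: pr_def gen_ideal)

lemma pr_mem: "a \<in> A \<Longrightarrow> b \<in> B \<Longrightarrow> a * b \<in> pr A B"
  unfolding pr_def by (rule subsetD[OF gen_sub]) blast

lemma pr_least: "is_ideal K \<Longrightarrow> (\<And>a b. a \<in> A \<Longrightarrow> b \<in> B \<Longrightarrow> a * b \<in> K) \<Longrightarrow> pr A B \<subseteq> K"
  unfolding pr_def by (rule gen_least) auto

lemma pr_mono: "A \<subseteq> A' \<Longrightarrow> B \<subseteq> B' \<Longrightarrow> pr A B \<subseteq> pr A' B'"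
  by (rule pr_least[OF pr_ideal]) (auto intro: pr_mem)

lemma pr_comm1: "pr A B \<subseteq> pr B A"
  by (rule pr_least[OF pr_ideal]) (subst mult.commute, rule pr_mem)

lemma pr_comm: "pr A B = pr B A"
  by (rule subset_antisym[OF pr_comm1 pr_comm1])

lemma pr_sub_left: "is_ideal A \<Longrightarrow> pr A B \<subseteq> A"
  apply (rule pr_least, assumption)
  apply (erule id_mult2, assumption)
  done

lemma pr_UNIV: assumes A: "is_ideal A" shows "pr A UNIV = A"
proof (rule subset_antisym)
  show "pr A UNIV \<subseteq> A" by (rule pr_sub_left[OF A])
  show "A \<subseteq> pr A UNIV"
  proof
    fix a assume "a \<in> A"
    then have "a * 1 \<in> pr A UNIV" by (rule pr_mem) simp
    then show "a \<in> pr A UNIV" by simp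
  qed
qed

lemma pr_UNIV_left: "is_ideal A \<Longrightarrow> pr UNIV A = A"
  by (subst pr_comm) (rule pr_UNIV)

lemma pre_ideal: "is_ideal P \<Longrightarrow> is_ideal {y. a * y \<in> P}"
  unfolding is_ideal_def by (auto simp: distrib_left mult.left_commute)

lemma pr_mem_gen: assumes "a \<in> A" "y \<in> pr B C" shows "a * y \<in> pr (pr A B) C"
proof -
  have "pr B C \<subseteq> {y. a * y \<in> pr (pr A B) C}"
    apply (rule pr_least[OF pre_ideal[OF pr_ideal]])
    using assms(1) by (simp add: pr_mem mult.assoc[symmetric])
  then show ?thesis using assms(2) by auto
qed

lemma pr_assoc1: "pr A (pr B C) \<subseteq> pr (pr A B) C"
  by (simp add: pr_ideal pr_least pr_mem_gen)

lemma pr_assoc: "pr A (pr B C) = pr (pr A B) C"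
proof
  show "pr A (pr B C) \<subseteq> pr (pr A B) C" by (rule pr_assoc1)
  have "pr (pr A B) C = pr C (pr A B)" by (rule pr_comm)
  also have "\<dots> \<subseteq> pr (pr C A) B" by (rule pr_assoc1)
  also have "\<dots> = pr B (pr C A)" by (rule pr_comm)
  also have "\<dots> \<subseteq> pr (pr B C) A" by (rule pr_assoc1)
  also have "\<dots> = pr A (pr B C)" by (rule pr_comm)
  finally show "pr (pr A B) C \<subseteq> pr A (pr B C)" .
qed

lemma pw_ideal: "is_ideal (ideal_pow A n)"
  by (cases n) (simp_all add: ideal_UNIV pw_Suc pr_ideal)

lemma pw_add: "pr (ideal_pow A m) (ideal_pow A n) = ideal_pow A (m + n)"
proof (induction m)
  case 0 then show ?case by (simp add: pr_UNIV_left pw_ideal)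
next
  case (Suc m)
  then show ?case by (simp add: pw_Suc pr_assoc[symmetric])
qed

lemma pw_mono: "A \<subseteq> B \<Longrightarrow> ideal_pow A n \<subseteq> ideal_pow B n"
  by (induction n) (simp_all add: pw_Suc pr_mono)

lemma power_in_pw: "r \<in> A \<Longrightarrow> r ^ n \<in> ideal_pow A n"
  by (induction n) (simp_all add: pw_Suc pr_mem)

lemma ic_mono: "K \<subseteq> K2 \<Longrightarrow> integral_closure K \<subseteq> integral_closure K2"
  unfolding integral_closure_def using pw_mono by blast


lemma red_trans_aux1:
  assumes "pr B (ideal_pow C m) = ideal_pow C (Suc m)"
  shows "pr B (ideal_pow C (m + k)) = ideal_pow C (Suc (m + k))"
proof -
  have "pr B (ideal_pow C (m + k)) = pr B (pr (ideal_pow C m) (ideal_pow C k))"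
    by (simp only: pw_add)
  also have "\<dots> = pr (pr B (ideal_pow C m)) (ideal_pow C k)"
    by (rule pr_assoc)
  also have "\<dots> = pr (ideal_pow C (Suc m)) (ideal_pow C k)"
    by (simp only: assms)
  also have "\<dots> = ideal_pow C (Suc m + k)" by (rule pw_add)
  finally show ?thesis by simp
qed

lemma red_trans_aux2:
  assumes "pr B (ideal_pow C m) = ideal_pow C (Suc m)"
  shows "ideal_pow C (m + k) = pr (ideal_pow B k) (ideal_pow C m)"
proof (induction k)
  case 0 then show ?case by (simp add: pr_UNIV_left pw_ideal)
next
  case (Suc k)
  have "ideal_pow C (m + Suc k) = pr B (ideal_pow C (m + k))"
    using red_trans_aux1[OF assms, of k] by simp
  also have "\<dots> = pr (ideal_pow B (Suc k)) (ideal_pow C m)"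
    using Suc by (simp add: pw_Suc pr_assoc)
  finally show ?case .
qed

lemma red_trans:
  assumes "pr A (ideal_pow B n) = ideal_pow B (Suc n)"
    and "pr B (ideal_pow C m) = ideal_pow C (Suc m)"
  shows "pr A (ideal_pow C (n + m)) = ideal_pow C (Suc (n + m))"
proof -
  have "ideal_pow C (Suc (n + m)) = ideal_pow C (m + Suc n)" by (simp add: add.commute)
  also have "\<dots> = pr (ideal_pow B (Suc n)) (ideal_pow C m)"
    by (rule red_trans_aux2[OF assms(2)])
  also have "\<dots> = pr A (pr (ideal_pow B n) (ideal_pow C m))"
    by (simp add: assms(1)[symmetric] pr_assoc)
  also have "\<dots> = pr A (ideal_pow C (m + n))" using red_trans_aux2[OF assms(2), of n] by simp
  finally show ?thesis by (simp add: add.commute)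
qed

lemma red_shift:
  assumes "pr A (ideal_pow C n) = ideal_pow C (Suc n)"
  shows "pr A (ideal_pow C (Suc n)) = ideal_pow C (Suc (Suc n))"
proof -
  have "pr A (ideal_pow C (Suc n)) = pr (pr A C) (ideal_pow C n)"
    by (simp add: pw_Suc pr_assoc)
  also have "\<dots> = pr C (pr A (ideal_pow C n))" by (simp only: pr_comm[of A C] pr_assoc)
  also have "\<dots> = ideal_pow C (Suc (Suc n))" by (simp add: assms pw_Suc)
  finally show ?thesis .
qed

lemma lin_ideal: assumes A: "is_ideal A" shows "is_ideal {a + s * r | a s. a \<in> A}"
  unfolding is_ideal_def
proof (intro conjI ballI allI)
  have "(0::'a) = 0 + 0 * r" by simp
  then show "0 \<in> {a + s * r | a s. a \<in> A}" using id_zero[OF A] by blast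
next
  fix x y assume "x \<in> {a + s * r | a s. a \<in> A}" "y \<in> {a + s * r | a s. a \<in> A}"
  then obtain a s a' s' where "a \<in> A" "x = a + s * r" "a' \<in> A" "y = a' + s' * r" by blast
  then have "x + y = (a + a') + (s + s') * r" "a + a' \<in> A"
    by (simp_all add: algebra_simps id_add A)
  then show "x + y \<in> {a + s * r | a s. a \<in> A}" by blast
next
  fix t x assume "x \<in> {a + s * r | a s. a \<in> A}"
  then obtain a s where "a \<in> A" "x = a + s * r" by blast
  then have "t * x = (t * a) + (t * s) * r" "t * a \<in> A"
    by (simp_all add: algebra_simps id_mult id_mult2 A)
  then show "t * x \<in> {a + s * r | a s. a \<in> A}" by blast
qed

lemma decomp: assumes "is_ideal K" "y \<in> ideal_gen (insert r K)"
  shows "\<exists>k s. k \<in> K \<and> y = k + s * r"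
proof -
  have "ideal_gen (insert r K) \<subseteq> {a + s * r | a s. a \<in> K}"
    apply (rule gen_least[OF lin_ideal[OF assms(1)]])
    apply clarify
    apply (erule insertE)
     apply (rule_tac x=0 in exI, rule_tac x=1 in exI, simp add: id_zero assms)
    apply (rule_tac x=x in exI, rule_tac x=0 in exI, simp)
    done
  then show ?thesis using assms(2) by blast
qed

lemma single_red:
  assumes K: "is_ideal K" and r: "r \<in> integral_closure K"
  defines "K' \<equiv> ideal_gen (insert r K)"
  shows "\<exists>N. pr K (ideal_pow K' N) = ideal_pow K' (Suc N)"
proof -
  have KK': "K \<subseteq> K'" and rK': "r \<in> K'" using gen_sub[of "insert r K"] by (auto simp: K'_def)
  have K'i: "is_ideal K'" by (simp add: K'_def gen_ideal)
  have C: "ideal_pow K' (Suc n) \<subseteq> {u + t * r ^ Suc n | u t. u \<in> pr K (ideal_pow K' n)}" for n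
  proof (induction n)
    case 0
    have e: "ideal_pow K' (Suc 0) = K'" by (simp add: pw_Suc pr_UNIV K'i)
    have e2: "pr K (ideal_pow K' 0) = K" by (simp add: pr_UNIV K)
    show ?case
    proof
      fix y assume "y \<in> ideal_pow K' (Suc 0)"
      then have "y \<in> K'" using e by simp
      then obtain k s where "k \<in> K" "y = k + s * r" using decomp[OF K] unfolding K'_def by blast
      then have "k \<in> pr K (ideal_pow K' 0)" "y = k + s * r ^ Suc 0" using e2 by simp_all
      then show "y \<in> {u + t * r ^ Suc 0 |u t. u \<in> pr K (ideal_pow K' 0)}" by blast
    qed
  next
    case (Suc n)
    show ?case
      unfolding pw_Suc[of K' "Suc n"]
    proof (rule pr_least[OF lin_ideal[OF pr_ideal]])
      fix a b assume a: "a \<in> K'" and b: "b \<in> ideal_pow K' (Suc n)"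
      obtain u t where u: "u \<in> pr K (ideal_pow K' n)" and bu: "b = u + t * r ^ Suc n"
        using Suc b by blast
      obtain k s where k: "k \<in> K" and ak: "a = k + s * r"
        using decomp[OF K] a unfolding K'_def by blast
      have "a * u \<in> pr (pr K' K) (ideal_pow K' n)" by (rule pr_mem_gen[OF a u])
      also have "\<dots> = pr K (ideal_pow K' (Suc n))"
        by (simp only: pw_Suc pr_assoc pr_comm[of K' K])
      finally have au: "a * u \<in> pr K (ideal_pow K' (Suc n))" .
      have "k * r ^ Suc n \<in> pr K (ideal_pow K' (Suc n))"
        by (rule pr_mem[OF k power_in_pw[OF rK']])
      then have kt: "t * (k * r ^ Suc n) \<in> pr K (ideal_pow K' (Suc n))"
        by (rule id_mult[OF pr_ideal])
      have "a * b = (a * u + t * (k * r ^ Suc n)) + (s * t) * r ^ Suc (Suc n)"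
        by (simp add: ak bu algebra_simps)
      moreover have "a * u + t * (k * r ^ Suc n) \<in> pr K (ideal_pow K' (Suc n))"
        by (rule id_add[OF pr_ideal au kt])
      ultimately show "a * b \<in> {u + t * r ^ Suc (Suc n) |u t. u \<in> pr K (ideal_pow K' (Suc n))}"
        by blast
    qed
  qed
  obtain d a where d: "d \<ge> 1" and a: "\<forall>i\<in>{1..d}. a i \<in> ideal_pow K i"
    and eq: "r ^ d + (\<Sum>i=1..d. a i * r ^ (d - i)) = 0"
    using r unfolding integral_closure_def by blast
  obtain n where dn: "d = Suc n" using d by (cases d) auto
  have terms: "a i * r ^ (d - i) \<in> pr K (ideal_pow K' n)" if i: "i \<in> {1..d}" for i
  proof -
    obtain i' where ii: "i = Suc i'" using i by (cases i) auto
    have "i' \<le> n" using i ii dn by auto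
    have "a i \<in> ideal_pow K i" using a i by blast
    then have "a i \<in> pr K (ideal_pow K i')" using ii by (simp add: pw_Suc)
    also have "\<dots> \<subseteq> pr K (ideal_pow K' i')" by (rule pr_mono[OF order_refl pw_mono[OF KK']])
    finally have ai: "a i \<in> pr K (ideal_pow K' i')" .
    have "r ^ (d - i) \<in> ideal_pow K' (n - i')" using dn ii power_in_pw[OF rK'] by simp
    then have "a i * r ^ (d - i) \<in> pr (pr K (ideal_pow K' i')) (ideal_pow K' (n - i'))"
      using ai pr_mem by blast
    also have "\<dots> = pr K (ideal_pow K' n)"
      using \<open>i' \<le> n\<close> by (simp add: pr_assoc[symmetric] pw_add)
    finally show ?thesis .
  qed
  have rdeq: "r ^ d = - (\<Sum>i=1..d. a i * r ^ (d - i))" using eq by (simp add: eq_neg_iff_add_eq_0)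
  have ssum: "(\<Sum>i=1..d. a i * r ^ (d - i)) \<in> pr K (ideal_pow K' n)"
    by (rule id_sum[OF pr_ideal terms])
  have "r ^ d \<in> pr K (ideal_pow K' n)" unfolding rdeq by (rule id_neg[OF pr_ideal ssum])
  then have rd: "r ^ Suc n \<in> pr K (ideal_pow K' n)" by (simp only: dn)
  have "ideal_pow K' (Suc n) \<subseteq> pr K (ideal_pow K' n)"
  proof
    fix y assume "y \<in> ideal_pow K' (Suc n)"
    then obtain u t where "u \<in> pr K (ideal_pow K' n)" "y = u + t * r ^ Suc n" using C by blast
    then show "y \<in> pr K (ideal_pow K' n)" using rd id_add id_mult pr_ideal by metis
  qed
  moreover have "pr K (ideal_pow K' n) \<subseteq> ideal_pow K' (Suc n)"
    unfolding pw_Suc by (rule pr_mono[OF KK' order_refl])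
  ultimately show ?thesis by blast
qed

lemma fin_red:
  assumes "finite F" "is_ideal I" "F \<subseteq> integral_closure I"
  shows "\<exists>N. pr I (ideal_pow (ideal_gen (I \<union> F)) N) = ideal_pow (ideal_gen (I \<union> F)) (Suc N)"
  using assms
proof (induction F rule: finite_induct)
  case empty
  then show ?case by (intro exI[of _ 0]) (simp add: gen_id pw_Suc)
next
  case (insert f F)
  define K where "K = ideal_gen (I \<union> F)"
  have Ki: "is_ideal K" by (simp add: K_def gen_ideal)
  have IK: "I \<subseteq> K" using gen_sub K_def by blast
  have eq: "ideal_gen (I \<union> insert f F) = ideal_gen (insert f K)"
  proof
    show "ideal_gen (I \<union> insert f F) \<subseteq> ideal_gen (insert f K)"
      by (rule gen_mono) (use gen_sub K_def in blast)
    have "K \<subseteq> ideal_gen (I \<union> insert f F)" unfolding K_def by (rule gen_mono) blast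
    then show "ideal_gen (insert f K) \<subseteq> ideal_gen (I \<union> insert f F)"
      using gen_sub[of "I \<union> insert f F"] by (intro gen_least[OF gen_ideal]) auto
  qed
  have "f \<in> integral_closure K" using insert.prems ic_mono[OF IK] by auto
  then obtain m where m: "pr K (ideal_pow (ideal_gen (insert f K)) m) = ideal_pow (ideal_gen (insert f K)) (Suc m)"
    using single_red[OF Ki] by blast
  obtain n where n: "pr I (ideal_pow K n) = ideal_pow K (Suc n)"
    using insert K_def by auto
  show ?case unfolding eq using red_trans[OF n m] by blast
qed

lemma pr_principal: assumes "is_ideal Y" shows "pr (ideal_gen {x}) Y = (\<lambda>b. x * b) ` Y"
proof
  show "(\<lambda>b. x * b) ` Y \<subseteq> pr (ideal_gen {x}) Y"
    using pr_mem gen_sub by blast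
  have pi: "is_ideal ((\<lambda>b. x * b) ` Y)"
    unfolding is_ideal_def
  proof (intro conjI ballI allI)
    show "0 \<in> (\<lambda>b. x * b) ` Y" using id_zero[OF assms] by (intro image_eqI[of _ _ 0]) simp_all
  next
    fix a b assume "a \<in> (\<lambda>b. x * b) ` Y" "b \<in> (\<lambda>b. x * b) ` Y"
    then obtain a' b' where "a' \<in> Y" "b' \<in> Y" "a = x * a'" "b = x * b'" by blast
    then show "a + b \<in> (\<lambda>b. x * b) ` Y"
      by (intro image_eqI[of _ _ "a' + b'"]) (simp_all add: algebra_simps id_add assms)
  next
    fix t a assume "a \<in> (\<lambda>b. x * b) ` Y"
    then obtain a' where "a' \<in> Y" "a = x * a'" by blast
    then show "t * a \<in> (\<lambda>b. x * b) ` Y"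
      by (intro image_eqI[of _ _ "t * a'"]) (simp_all add: algebra_simps id_mult id_mult2 assms)
  qed
  have gx: "ideal_gen {x} \<subseteq> {s * x | s. True}"
  proof (rule gen_least)
    show "{x} \<subseteq> {s * x | s. True}" by (auto intro: exI[of _ 1])
    show "is_ideal {s * x | s. True}" unfolding is_ideal_def
    proof (intro conjI ballI allI)
      show "0 \<in> {s * x | s. True}" by (auto intro: exI[of _ 0])
    next
      fix a b assume "a \<in> {s * x | s. True}" "b \<in> {s * x | s. True}"
      then obtain s s' where "a = s * x" "b = s' * x" by blast
      then have "a + b = (s + s') * x" by (simp add: algebra_simps)
      then show "a + b \<in> {s * x | s. True}" by blast
    next
      fix t a assume "a \<in> {s * x | s. True}"
      then obtain s where "a = s * x" by blast
      then have "t * a = (t * s) * x" by (simp add: algebra_simps)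
      then show "t * a \<in> {s * x | s. True}" by blast
    qed
  qed
  show "pr (ideal_gen {x}) Y \<subseteq> (\<lambda>b. x * b) ` Y"
  proof (rule pr_least[OF pi])
    fix a b assume "a \<in> ideal_gen {x}" "b \<in> Y"
    then obtain s where "a = s * x" using gx by blast
    then show "a * b \<in> (\<lambda>b. x * b) ` Y"
      using \<open>b \<in> Y\<close> by (intro image_eqI[of _ _ "s * b"]) (simp_all add: algebra_simps id_mult id_mult2 assms)
  qed
qed


lemma nzd_pow: assumes "nonzerodivisor s" shows "nonzerodivisor (s ^ n)"
proof (induction n)
  case 0 show ?case by (simp add: nonzerodivisor_def)
next
  case (Suc n) show ?case unfolding nonzerodivisor_def
  proof (intro allI impI)
    fix r assume "s ^ Suc n * r = 0"
    then have "s * (s ^ n * r) = 0" by (simp only: power_Suc mult.assoc)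
    then have "s ^ n * r = 0" using assms unfolding nonzerodivisor_def by blast
    then show "r = 0" using Suc unfolding nonzerodivisor_def by blast
  qed
qed

lemma module_mult: "module ((*) :: 'a::comm_ring_1 \<Rightarrow> 'a \<Rightarrow> 'a)"
  apply unfold_locales
     apply (rule distrib_left)
    apply (rule distrib_right)
   apply (rule mult.assoc[symmetric])
  apply (rule mult_1_left)
  done

theorem lemma6p3:
  fixes M I J :: "'a::comm_ring_1 set" and x :: 'a
    and sN :: "'a \<Rightarrow> 'b::ab_group_add \<Rightarrow> 'b"
    and sL :: "'a \<Rightarrow> 'c::ab_group_add \<Rightarrow> 'c"
  assumes "noetherian TYPE('a)"
    and "local_ring M"
    and "krull_dim_is TYPE('a) 1"
    and "cohen_macaulay_local M"
    and "is_ideal I" and "regular_ideal I"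
    and "module sN" and "I = trace_of sN"
    and "principal_reduction x I"
    and "is_ideal J" and "module sL" and "J = trace_of sL"
    and "I \<subseteq> J" and "J \<subseteq> integral_closure I"
    and "stable_ideal J"
  shows "I = J"
proof -
  note Ii = \<open>is_ideal I\<close> and Ji = \<open>is_ideal J\<close> and IJ = \<open>I \<subseteq> J\<close>
  obtain m where xI: "x \<in> I" and m: "(\<lambda>b. x * b) ` ideal_pow I m = ideal_pow I (Suc m)"
    using assms(9) unfolding principal_reduction_def by blast
  have xnzd: "nonzerodivisor x"
  proof -
    obtain s where s: "s \<in> I" "nonzerodivisor s" using assms(6) unfolding regular_ideal_def by blast
    have "s ^ Suc m \<in> ideal_pow I (Suc m)" by (rule power_in_pw[OF s(1)])
    then obtain c where c: "s ^ Suc m = x * c" using m by force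
    show ?thesis unfolding nonzerodivisor_def
    proof (intro allI impI)
      fix r assume "x * r = 0"
      then have "s ^ Suc m * r = c * (x * r)" by (simp only: c mult.commute mult.left_commute)
      then have "s ^ Suc m * r = 0" using \<open>x * r = 0\<close> by simp
      then show "r = 0" using nzd_pow[OF s(2)] unfolding nonzerodivisor_def by blast
    qed
  qed
  obtain F where F: "finite F" "J = ideal_gen F"
    using assms(1) Ji unfolding noetherian_def by blast
  have FJ: "F \<subseteq> J" using F gen_sub by blast
  have gIF: "ideal_gen (I \<union> F) = J"
  proof
    show "ideal_gen (I \<union> F) \<subseteq> J" using IJ FJ by (intro gen_least[OF Ji]) auto
    show "J \<subseteq> ideal_gen (I \<union> F)" unfolding F(2) by (rule gen_mono) auto
  qed
  obtain N where N: "pr I (ideal_pow J N) = ideal_pow J (Suc N)"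
    using fin_red[OF F(1) Ii] FJ assms(14) gIF by auto
  have m': "pr (ideal_gen {x}) (ideal_pow I m) = ideal_pow I (Suc m)"
    by (rule trans[OF pr_principal[OF pw_ideal] m])
  have red0: "pr (ideal_gen {x}) (ideal_pow J (m + N)) = ideal_pow J (Suc (m + N))"
    by (rule red_trans[OF m' N])
  define n where "n = Suc (m + N)"
  have red: "(\<lambda>b. x * b) ` ideal_pow J n = ideal_pow J (Suc n)"
    unfolding n_def by (rule trans[OF sym[OF pr_principal[OF pw_ideal]] red_shift[OF red0]])
  have colon: "\<exists>c\<in>J. j * b = x * c" if j: "j \<in> J" and b: "b \<in> J" for j b
  proof -
    have "(j, x) \<in> frac_colon (ideal_pow J n) (ideal_pow J n)"
      unfolding frac_colon_def
    proof (clarify, intro conjI ballI)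
      show "nonzerodivisor x" by (rule xnzd)
      fix b assume "b \<in> ideal_pow J n"
      then have "j * b \<in> ideal_pow J (Suc n)" by (simp add: pw_Suc pr_mem j)
      then show "\<exists>c\<in>ideal_pow J n. j * b = x * c" using red by force
    qed
    then have "(j, x) \<in> blowup_ring J" unfolding blowup_ring_def n_def by blast
    then have "(j, x) \<in> frac_colon J J" using assms(15) unfolding stable_ideal_def by simp
    then show ?thesis using b unfolding frac_colon_def by blast
  qed
  have uniq: "c = c'" if "x * c = x * c'" for c c'
  proof -
    have "x * (c - c') = 0" using that by (simp add: algebra_simps)
    then have "c - c' = 0" using xnzd unfolding nonzerodivisor_def by blast
    then show ?thesis by simp
  qed
  show ?thesis
  proof
    show "J \<subseteq> I"
    proof
      fix j assume j: "j \<in> J"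
      define h where "h y = (THE c. j * y = x * c)" for y
      have h: "j * y = x * h y" if y: "y \<in> I" for y
      proof -
        obtain c where c: "j * y = x * c" using colon[OF j] y IJ by blast
        have "(THE c. j * y = x * c) = c"
        proof (rule the_equality[where P="\<lambda>c. j * y = x * c", OF c])
          fix c' assume "j * y = x * c'"
          then have "x * c' = x * c" using c by simp
          then show "c' = c" by (rule uniq)
        qed
        then show ?thesis unfolding h_def using c by simp
      qed
      have hu: "h y = c" if "y \<in> I" "j * y = x * c" for y c
      proof (rule uniq)
        show "x * h y = x * c" using h[OF that(1)] that(2) by simp
      qed
      have "x \<in> trace_of sN" using xI assms(8) by simp
      then obtain k :: nat and f v where xs: "x = (\<Sum>i<k. f i (v i))"
        and fh: "\<forall>i<k. module_hom sN ((*) :: 'a \<Rightarrow> 'a \<Rightarrow> 'a) (f i)"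
        unfolding trace_of_def mem_Collect_eq by blast
      have fI: "f i w \<in> I" if i: "i < k" for i w
      proof -
        have "f i w \<in> trace_of sN"
          unfolding trace_of_def mem_Collect_eq
          apply (rule exI[of _ 1], rule exI[of _ "\<lambda>_. f i"], rule exI[of _ "\<lambda>_. w"])
          using fh i by simp
        then show ?thesis using assms(8) by simp
      qed
      define g where "g i w = h (f i w)" for i w
      have gh: "module_hom sN ((*) :: 'a \<Rightarrow> 'a \<Rightarrow> 'a) (g i)" if i: "i < k" for i
      proof -
        have fi: "module_hom sN (*) (f i)" using fh i by blast
        note fi' = fi[unfolded module_hom_iff]
        show ?thesis unfolding module_hom_iff
        proof (intro conjI allI)
          show "module sN" using fi' by (rule conjunct1)
          show "module ((*) :: 'a \<Rightarrow> 'a \<Rightarrow> 'a)" by (rule module_mult)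
        next
          fix a b
          have add_f: "f i (a + b) = f i a + f i b" using fi' by blast
          have "j * f i (a + b) = j * f i a + j * f i b" by (simp only: add_f distrib_left)
          also have "\<dots> = x * g i a + x * g i b" by (simp only: g_def h[OF fI[OF i]])
          also have "\<dots> = x * (g i a + g i b)" by (simp only: distrib_left)
          finally have "h (f i (a + b)) = g i a + g i b" by (rule hu[OF fI[OF i]])
          then show "g i (a + b) = g i a + g i b" by (simp only: g_def)
        next
          fix c a
          have sc: "f i (sN c a) = c * f i a" using fi' by blast
          have "j * f i (sN c a) = c * (j * f i a)" by (simp only: sc mult.left_commute)
          also have "\<dots> = c * (x * g i a)" by (simp only: g_def h[OF fI[OF i]])
          also have "\<dots> = x * (c * g i a)" by (simp only: mult.left_commute)
          finally have "h (f i (sN c a)) = c * g i a" by (rule hu[OF fI[OF i]])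
          then show "g i (sN c a) = c * g i a" by (simp only: g_def)
        qed
      qed
      have mem: "(\<Sum>i<k. g i (v i)) \<in> I"
        unfolding assms(8) trace_of_def mem_Collect_eq
        apply (rule exI[of _ k], rule exI[of _ g], rule exI[of _ v])
        using gh by simp
      have "x * (\<Sum>i<k. g i (v i)) = (\<Sum>i<k. x * g i (v i))" by (simp add: sum_distrib_left)
      also have "\<dots> = (\<Sum>i<k. j * f i (v i))"
      proof (rule sum.cong)
        fix i assume "i \<in> {..<k}"
        then have "i < k" by simp
        then show "x * g i (v i) = j * f i (v i)" by (simp only: g_def h[OF fI])
      qed simp
      also have "\<dots> = j * x" by (simp add: xs sum_distrib_left)
      also have "\<dots> = x * j" by simp
      finally have "(\<Sum>i<k. g i (v i)) = j" by (rule uniq)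
      then show "j \<in> I" using mem by simp
    qed
  qed (rule IJ)
qed

end
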